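(* For every $\theta\in[0,1]$, $f(\theta)=l(\theta)$.
   Context: A weighted digraph $D=(V,A,w)$ is a digraph without loops or parallel arcs (opposite arcs allowed) with weights $w:A\to\mathbb{R}_{\ge0}$; $w(D)$ is the total arc weight. For a partition $(X,Y)$ of $V$, $w(X,Y)$ is the total weight of arcs from $X$ to $Y$, and $\mathrm{mac}(D)=\max_{(X,Y)}w(X,Y)$. For $v\in V$, $r(v)=w^+(v)-w^-(v)$ (total weight leaving minus total weight entering $v$); $r^+(D)=\sum_{r(x)>0}r(x)$; $\theta(D)=r^+(D)/w(D)$ for $w(D)>0$. For $\theta\in[0,1]$, $f(\theta)$ is the supremum of all reals $g$ such that $\mathrm{mac}(D)\ge g\cdot w(D)$ for all weighted digraphs $D$ with $w(D)>0$ and $\theta(D)=\theta$. Also $l(\theta)=\frac14+\frac{\theta^2}{4(1-2\theta)}$ if $\theta<1/3$ and $l(\theta)=\theta$ if $\theta\ge1/3$. *)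

theory Defs
  imports Complex_Main
begin

text \<open>The weight function w is zero off V x V and on the diagonal (no loops);
an arc (u,v) is present iff w u v > 0, so parallel arcs cannot occur while opposite arcs may.\<close>

definition weighted_digraph :: "nat set \<Rightarrow> (nat \<Rightarrow> nat \<Rightarrow> real) \<Rightarrow> bool" where
  "weighted_digraph V w \<longleftrightarrow> finite V \<and> (\<forall>u v. w u v \<ge> 0) \<and> (\<forall>v. w v v = 0)
     \<and> (\<forall>u v. (u \<notin> V \<or> v \<notin> V) \<longrightarrow> w u v = 0)"

definition total_weight :: "nat set \<Rightarrow> (nat \<Rightarrow> nat \<Rightarrow> real) \<Rightarrow> real" where
  "total_weight V w = (\<Sum>u\<in>V. \<Sum>v\<in>V. w u v)"

definition cut_weight :: "(nat \<Rightarrow> nat \<Rightarrow> real) \<Rightarrow> nat set \<Rightarrow> nat set \<Rightarrow> real" where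
  "cut_weight w X Y = (\<Sum>x\<in>X. \<Sum>y\<in>Y. w x y)"

definition mac :: "nat set \<Rightarrow> (nat \<Rightarrow> nat \<Rightarrow> real) \<Rightarrow> real" where
  "mac V w = Max {cut_weight w X (V - X) | X. X \<subseteq> V}"

definition excess :: "nat set \<Rightarrow> (nat \<Rightarrow> nat \<Rightarrow> real) \<Rightarrow> nat \<Rightarrow> real" where
  "excess V w v = (\<Sum>y\<in>V. w v y) - (\<Sum>y\<in>V. w y v)"

definition rplus :: "nat set \<Rightarrow> (nat \<Rightarrow> nat \<Rightarrow> real) \<Rightarrow> real" where
  "rplus V w = (\<Sum>x\<in>{x\<in>V. excess V w x > 0}. excess V w x)"

definition theta :: "nat set \<Rightarrow> (nat \<Rightarrow> nat \<Rightarrow> real) \<Rightarrow> real" where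
  "theta V w = rplus V w / total_weight V w"

definition f_fun :: "real \<Rightarrow> real" where
  "f_fun t = Sup {g. \<forall>V w. weighted_digraph V w \<and> total_weight V w > 0 \<and> theta V w = t
                 \<longrightarrow> mac V w \<ge> g * total_weight V w}"

definition l_fun :: "real \<Rightarrow> real" where
  "l_fun t = (if t < 1/3 then 1/4 + t^2 / (4 * (1 - 2*t)) else t)"

end

theory Submission
  imports Defs
begin



lemma mac_ge:
  assumes "finite V" "X \<subseteq> V"
  shows "cut_weight w X (V - X) \<le> mac V w"
proof -
  have e: "{cut_weight w X (V - X) | X. X \<subseteq> V} = (\<lambda>X. cut_weight w X (V - X)) ` Pow V" by auto
  show ?thesis unfolding mac_def e using assms by (intro Max_ge) auto
qed

lemma mac_le:
  assumes "finite V" "\<And>X. X \<subseteq> V \<Longrightarrow> cut_weight w X (V - X) \<le> c"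
  shows "mac V w \<le> c"
proof -
  have e: "{cut_weight w X (V - X) | X. X \<subseteq> V} = (\<lambda>X. cut_weight w X (V - X)) ` Pow V" by auto
  show ?thesis unfolding mac_def e using assms by (subst Max_le_iff) auto
qed

lemma sum_ifX: "finite V \<Longrightarrow> (\<Sum>v\<in>V. if v\<in>X then 0 else f v) = (\<Sum>v\<in>V-X. (f v::real))"
  by (rule sum.mono_neutral_cong_right) auto

definition Fp :: "nat set \<Rightarrow> (nat\<Rightarrow>nat\<Rightarrow>real) \<Rightarrow> (nat \<Rightarrow> real) \<Rightarrow> real" where
  "Fp V w p = (\<Sum>u\<in>V. \<Sum>v\<in>V. w u v * p u * (1 - p v))"

lemma Fp_decomp:
  assumes "finite V" "z \<in> V" "w z z = 0"
  shows "Fp V w p = (\<Sum>u\<in>V-{z}. \<Sum>v\<in>V-{z}. w u v * p u * (1 - p v))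
     + p z * (\<Sum>v\<in>V-{z}. w z v * (1 - p v)) + (1 - p z) * (\<Sum>u\<in>V-{z}. w u z * p u)"
proof -
  have "Fp V w p = (\<Sum>v\<in>V. w z v * p z * (1 - p v)) + (\<Sum>u\<in>V-{z}. \<Sum>v\<in>V. w u v * p u * (1 - p v))"
    unfolding Fp_def by (subst sum.remove[OF assms(1,2)]) simp
  also have "(\<Sum>v\<in>V. w z v * p z * (1 - p v)) = p z * (\<Sum>v\<in>V-{z}. w z v * (1 - p v))"
    using assms by (simp add: sum.remove sum_distrib_left algebra_simps)
  also have "(\<Sum>u\<in>V-{z}. \<Sum>v\<in>V. w u v * p u * (1 - p v))
      = (\<Sum>u\<in>V-{z}. w u z * p u * (1 - p z) + (\<Sum>v\<in>V-{z}. w u v * p u * (1 - p v)))"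
    using assms by (intro sum.cong refl) (subst sum.remove[OF assms(1,2)], simp)
  also have "\<dots> = (\<Sum>u\<in>V-{z}. w u z * p u * (1 - p z)) + (\<Sum>u\<in>V-{z}. \<Sum>v\<in>V-{z}. w u v * p u * (1 - p v))"
    by (rule sum.distrib)
  also have "(\<Sum>u\<in>V-{z}. w u z * p u * (1 - p z)) = (1 - p z) * (\<Sum>u\<in>V-{z}. w u z * p u)"
    by (simp add: sum_distrib_left mult_ac)
  finally show ?thesis by simp
qed

lemma round_aux:
  assumes "finite V" "\<forall>v. w v v = 0"
  shows "finite S \<Longrightarrow> \<forall>p. (\<forall>v\<in>V. 0 \<le> p v \<and> p v \<le> 1) \<longrightarrow> (\<forall>v\<in>V-S. p v = 0 \<or> p v = 1)
     \<longrightarrow> (\<exists>X\<subseteq>V. Fp V w p \<le> cut_weight w X (V-X))"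
proof (induction S rule: finite_induct)
  case empty
  show ?case
  proof (intro allI impI)
    fix p :: "nat \<Rightarrow> real"
    assume h: "\<forall>v\<in>V-{}. p v = 0 \<or> p v = 1"
    define X where "X = {v\<in>V. p v = 1}"
    have pu: "\<And>u. u \<in> V \<Longrightarrow> p u = (if u \<in> X then 1 else 0)" using h unfolding X_def by auto
    have "Fp V w p = (\<Sum>u\<in>V. \<Sum>v\<in>V. (if u \<in> X then (if v \<in> X then 0 else w u v) else 0))"
      unfolding Fp_def by (intro sum.cong refl) (simp add: pu)
    also have "\<dots> = (\<Sum>u\<in>V. if u \<in> X then (\<Sum>v\<in>V. (if v \<in> X then 0 else w u v)) else 0)"
      by (intro sum.cong refl) auto
    also have "\<dots> = (\<Sum>u\<in>X. \<Sum>v\<in>V. (if v \<in> X then 0 else w u v))"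
    proof -
      have VX: "V \<inter> X = X" unfolding X_def by auto
      show ?thesis by (simp only: sum.inter_restrict[OF assms(1), symmetric] VX)
    qed
    also have "\<dots> = (\<Sum>u\<in>X. \<Sum>v\<in>V-X. w u v)"
      using sum_ifX[OF assms(1)] by simp
    finally have "Fp V w p = cut_weight w X (V - X)" unfolding cut_weight_def .
    moreover have "X \<subseteq> V" unfolding X_def by auto
    ultimately show "\<exists>X\<subseteq>V. Fp V w p \<le> cut_weight w X (V-X)" by auto
  qed
next
  case (insert z S)
  show ?case
  proof (intro allI impI)
    fix p :: "nat \<Rightarrow> real"
    assume b: "\<forall>v\<in>V. 0 \<le> p v \<and> p v \<le> 1" and h: "\<forall>v\<in>V-insert z S. p v = 0 \<or> p v = 1"
    show "\<exists>X\<subseteq>V. Fp V w p \<le> cut_weight w X (V-X)"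
    proof (cases "z \<in> V")
      case False
      then show ?thesis using insert.IH b h by auto
    next
      case True
      let ?G = "\<lambda>q. (\<Sum>u\<in>V-{z}. \<Sum>v\<in>V-{z}. w u v * q u * (1 - q v))"
      let ?a = "\<lambda>q. (\<Sum>v\<in>V-{z}. w z v * (1 - q v))"
      let ?b = "\<lambda>q. (\<Sum>u\<in>V-{z}. w u z * q u)"
      have agree: "?G (p(z:=x)) = ?G p \<and> ?a (p(z:=x)) = ?a p \<and> ?b (p(z:=x)) = ?b p" for x
        by (auto intro!: sum.cong)
      have d: "Fp V w q = ?G q + q z * ?a q + (1 - q z) * ?b q" for q
        using Fp_decomp[OF assms(1) True] assms(2) by blast
      have c0: "\<forall>v\<in>V. 0 \<le> (p(z:=0)) v \<and> (p(z:=0)) v \<le> 1" "\<forall>v\<in>V-S. (p(z:=0)) v = 0 \<or> (p(z:=0)) v = 1"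
        using b h by auto
      have c1: "\<forall>v\<in>V. 0 \<le> (p(z:=1)) v \<and> (p(z:=1)) v \<le> 1" "\<forall>v\<in>V-S. (p(z:=1)) v = 0 \<or> (p(z:=1)) v = 1"
        using b h by auto
      obtain X0 where X0: "X0 \<subseteq> V" "Fp V w (p(z:=0)) \<le> cut_weight w X0 (V-X0)"
        using mp[OF mp[OF spec[OF insert.IH, of "p(z:=0)"] c0(1)] c0(2)] by blast
      obtain X1 where X1: "X1 \<subseteq> V" "Fp V w (p(z:=1)) \<le> cut_weight w X1 (V-X1)"
        using mp[OF mp[OF spec[OF insert.IH, of "p(z:=1)"] c1(1)] c1(2)] by blast
      have F0: "Fp V w (p(z:=0)) = ?G p + ?b p" using d[of "p(z:=0)"] agree[of 0] by simp
      have F1: "Fp V w (p(z:=1)) = ?G p + ?a p" using d[of "p(z:=1)"] agree[of 1] by simp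
      have pz: "0 \<le> p z" "p z \<le> 1" using b True by auto
      show ?thesis
      proof (cases "?a p \<ge> ?b p")
        case True
        have m: "(1 - p z) * ?b p \<le> (1 - p z) * ?a p" using True pz by (intro mult_left_mono) auto
        have e: "p z * ?a p + (1 - p z) * ?a p = ?a p" by (simp add: algebra_simps)
        have "Fp V w p \<le> ?G p + ?a p" using d[of p] m e by linarith
        then show ?thesis using X1 F1 by auto
      next
        case False
        have m: "p z * ?a p \<le> p z * ?b p" using False pz by (intro mult_left_mono) auto
        have e: "p z * ?b p + (1 - p z) * ?b p = ?b p" by (simp add: algebra_simps)
        have "Fp V w p \<le> ?G p + ?b p" using d[of p] m e by linarith
        then show ?thesis using X0 F0 by auto
      qed
    qed
  qed
qed

lemma round_Fp:
  assumes "weighted_digraph V w" "\<forall>v\<in>V. 0 \<le> p v \<and> p v \<le> 1"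
  shows "Fp V w p \<le> mac V w"
proof -
  have f: "finite V" "\<forall>v. w v v = 0" using assms(1) unfolding weighted_digraph_def by auto
  obtain X where X: "X \<subseteq> V" "Fp V w p \<le> cut_weight w X (V-X)"
    using mp[OF mp[OF spec[OF round_aux[of V w V, OF f(1) f(2) f(1)], of p] assms(2)]] by blast
  have "cut_weight w X (V-X) \<le> mac V w" by (rule mac_ge[OF f(1) X(1)])
  then show ?thesis using X(2) by linarith
qed




lemma dsum_split:
  fixes h :: "nat \<Rightarrow> nat \<Rightarrow> real"
  assumes "finite V" "P \<subseteq> V"
  shows "(\<Sum>u\<in>V. \<Sum>v\<in>V. h u v) = (\<Sum>u\<in>P. \<Sum>v\<in>P. h u v) + (\<Sum>u\<in>P. \<Sum>v\<in>V-P. h u v)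
     + (\<Sum>u\<in>V-P. \<Sum>v\<in>P. h u v) + (\<Sum>u\<in>V-P. \<Sum>v\<in>V-P. h u v)"
proof -
  have s: "sum g V = sum g P + sum g (V - P)" for g :: "nat \<Rightarrow> real"
    using sum.subset_diff[OF assms(2) assms(1), of g] by linarith
  show ?thesis by (simp add: s sum.distrib)
qed

lemma cw_const: "(\<Sum>u\<in>A. \<Sum>v\<in>B. w u v * c) = c * cut_weight w A B"
  unfolding cut_weight_def by (simp add: sum_distrib_right sum_distrib_left mult.commute)

lemma lower_s:
  assumes wd: "weighted_digraph V w" and s: "0 \<le> s" "s \<le> 1"
  shows "s*(1-s)*(total_weight V w - rplus V w) + s^2 * rplus V w \<le> mac V w"
proof -
  have fin: "finite V" and nn: "\<And>u v. w u v \<ge> 0" using wd unfolding weighted_digraph_def by auto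
  define P where "P = {x\<in>V. excess V w x > 0}"
  define Q where "Q = V - P"
  have PV: "P \<subseteq> V" unfolding P_def by auto
  define p where "p = (\<lambda>v. if v \<in> P then s else 1 - s)"
  have "Fp V w p \<le> mac V w" using round_Fp[OF wd] s unfolding p_def by auto
  define WPP where "WPP = cut_weight w P P"
  define WPO where "WPO = cut_weight w P Q"
  define WOP where "WOP = cut_weight w Q P"
  define WOO where "WOO = cut_weight w Q Q"
  have F: "Fp V w p = s*(1-s)*WPP + s^2*WPO + (1-s)^2*WOP + s*(1-s)*WOO"
  proof -
    have "Fp V w p = (\<Sum>u\<in>P. \<Sum>v\<in>P. w u v * (s*(1-s))) + (\<Sum>u\<in>P. \<Sum>v\<in>Q. w u v * s^2)
      + (\<Sum>u\<in>Q. \<Sum>v\<in>P. w u v * (1-s)^2) + (\<Sum>u\<in>Q. \<Sum>v\<in>Q. w u v * (s*(1-s)))"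
      unfolding Fp_def dsum_split[OF fin PV] Q_def
      by (intro arg_cong2[where f="(+)"] sum.cong refl) (auto simp: p_def power2_eq_square)
    then show ?thesis unfolding WPP_def WPO_def WOP_def WOO_def cw_const by simp
  qed
  have T: "total_weight V w = WPP + WPO + WOP + WOO"
    unfolding total_weight_def dsum_split[OF fin PV] WPP_def WPO_def WOP_def WOO_def cut_weight_def Q_def by simp
  have R: "rplus V w = WPO - WOP"
  proof -
    have "rplus V w = (\<Sum>x\<in>P. \<Sum>y\<in>V. w x y) - (\<Sum>x\<in>P. \<Sum>y\<in>V. w y x)"
    proof -
      have "rplus V w = (\<Sum>x\<in>P. excess V w x)" unfolding rplus_def P_def by simp
      then show ?thesis unfolding excess_def by (simp add: sum_subtractf)
    qed
    also have "(\<Sum>x\<in>P. \<Sum>y\<in>V. w y x) = (\<Sum>y\<in>V. \<Sum>x\<in>P. w y x)" by (rule sum.swap)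
    also have "\<dots> = WPP + WOP"
    proof -
      have "(\<Sum>y\<in>V. \<Sum>x\<in>P. w y x) = (\<Sum>y\<in>P. \<Sum>x\<in>P. w y x) + (\<Sum>y\<in>V-P. \<Sum>x\<in>P. w y x)"
        using sum.subset_diff[OF PV fin, of "\<lambda>y. \<Sum>x\<in>P. w y x"] by linarith
      then show ?thesis unfolding WPP_def WOP_def cut_weight_def Q_def .
    qed
    also have "(\<Sum>x\<in>P. \<Sum>y\<in>V. w x y) = WPP + WPO"
    proof -
      have "(\<Sum>x\<in>P. \<Sum>y\<in>V. w x y) = (\<Sum>x\<in>P. (\<Sum>y\<in>P. w x y) + (\<Sum>y\<in>V-P. w x y))"
        by (rule sum.cong[OF refl]) (metis add.commute sum.subset_diff[OF PV fin])
      then show ?thesis unfolding WPP_def WPO_def cut_weight_def Q_def by (simp add: sum.distrib)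
    qed
    finally show ?thesis by simp
  qed
  have "WOP \<ge> 0" unfolding WOP_def cut_weight_def by (intro sum_nonneg) (simp add: nn)
  then have "s*(1-s)*(total_weight V w - rplus V w) + s^2 * rplus V w \<le> Fp V w p"
    unfolding F T R
  proof -
    assume "WOP \<ge> 0"
    have "s*(1-s)*(WPP + WPO + WOP + WOO - (WPO - WOP)) + s^2*(WPO - WOP) + WOP*(1-2*s)^2
      = s*(1-s)*WPP + s^2*WPO + (1-s)^2*WOP + s*(1-s)*WOO" by (simp add: algebra_simps power2_eq_square)
    moreover have "WOP*(1-2*s)^2 \<ge> 0" using \<open>WOP \<ge> 0\<close> by simp
    ultimately show "s*(1-s)*(WPP + WPO + WOP + WOO - (WPO - WOP)) + s^2*(WPO - WOP)
      \<le> s*(1-s)*WPP + s^2*WPO + (1-s)^2*WOP + s*(1-s)*WOO" by linarith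
  qed
  with \<open>Fp V w p \<le> mac V w\<close> show ?thesis by linarith
qed

lemma l_achieve:
  fixes t :: real
  assumes "0 \<le> t"
  shows "\<exists>s. 0 \<le> s \<and> s \<le> 1 \<and> l_fun t \<le> s*(1-s)*(1-t) + s^2*t"
proof (cases "t < 1/3")
  case True
  define s where "s = (1-t)/(2*(1-2*t))"
  have d: "1 - 2*t > 0" using True by simp
  have "0 \<le> s" "s \<le> 1" unfolding s_def using d True assms by (simp_all add: field_simps)
  moreover have "l_fun t = s*(1-s)*(1-t) + s^2*t"
  proof -
    have hs: "2*(1-2*t)*s = 1-t" unfolding s_def using d by simp
    have e1: "4*(1-2*t)*(s*(1-s)*(1-t) + s^2*t) = (1-t)*(2*(2*(1-2*t)*s)) - (2*(1-2*t)*s)^2"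
      by (simp add: algebra_simps power2_eq_square)
    have e2: "4*(1-2*t)*l_fun t = (1-2*t) + t^2"
      unfolding l_fun_def using True d by (simp add: field_simps)
    have "4*(1-2*t)*l_fun t = 4*(1-2*t)*(s*(1-s)*(1-t) + s^2*t)"
      unfolding e1 e2 hs by (simp add: algebra_simps power2_eq_square)
    then show ?thesis using d by simp
  qed
  ultimately show ?thesis by (intro exI[of _ s]) simp
next
  case False
  then show ?thesis by (intro exI[of _ 1]) (simp add: l_fun_def)
qed

lemma lower_bound:
  assumes wd: "weighted_digraph V w" and pos: "total_weight V w > 0" and th: "theta V w = t" and t: "0 \<le> t"
  shows "l_fun t * total_weight V w \<le> mac V w"
proof -
  obtain s where s: "0 \<le> s" "s \<le> 1" "l_fun t \<le> s*(1-s)*(1-t) + s^2*t" using l_achieve[OF t] by blast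
  have r: "rplus V w = t * total_weight V w" using th pos unfolding theta_def by (simp add: field_simps)
  have "l_fun t * total_weight V w \<le> (s*(1-s)*(1-t) + s^2*t) * total_weight V w"
    using s(3) pos by (simp add: mult_right_mono)
  also have "\<dots> = s*(1-s)*(total_weight V w - rplus V w) + s^2 * rplus V w"
    unfolding r by (simp add: algebra_simps)
  also have "\<dots> \<le> mac V w" by (rule lower_s[OF wd s(1,2)])
  finally show ?thesis .
qed




definition ca :: "nat \<Rightarrow> real \<Rightarrow> real" where "ca n t = (1-t)/(2*real n*(real n - 1))"
definition cb :: "nat \<Rightarrow> real \<Rightarrow> real" where "cb n t = t/(real n)^2"

definition cw :: "nat \<Rightarrow> real \<Rightarrow> nat \<Rightarrow> nat \<Rightarrow> real" where
 "cw n t u v = (if u < n \<and> v < n \<and> u \<noteq> v then ca n t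
   else if n \<le> u \<and> u < 2*n \<and> n \<le> v \<and> v < 2*n \<and> u \<noteq> v then ca n t
   else if u < n \<and> n \<le> v \<and> v < 2*n then cb n t else 0)"

lemma E_le:
  fixes t p q :: real
  assumes "0\<le>t" "t\<le>1" "0\<le>p" "p\<le>1" "0\<le>q" "q\<le>1"
  shows "(1-t)/2*(p*(1-p)+q*(1-q)) + t*p*(1-q) \<le> l_fun t"
proof -
  define \<sigma> where "\<sigma> = p - q"
  have e: "(1-t)/2*(p*(1-p)+q*(1-q)) + t*p*(1-q) = 1/4 + t*\<sigma>/2 - (1-2*t)*\<sigma>^2/4 - (p+q-1)^2/4"
    unfolding \<sigma>_def by (simp add: field_simps power2_eq_square)
  have sb: "-1 \<le> \<sigma>" "\<sigma> \<le> 1" unfolding \<sigma>_def using assms by auto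
  have "1/4 + t*\<sigma>/2 - (1-2*t)*\<sigma>^2/4 \<le> l_fun t"
  proof (cases "t < 1/3")
    case True
    have d: "1-2*t > 0" using True by simp
    have "4*(1-2*t)*(1/4 + t*\<sigma>/2 - (1-2*t)*\<sigma>^2/4) = (1-2*t) + t^2 - ((1-2*t)*\<sigma> - t)^2"
      by (simp add: field_simps power2_eq_square)
    also have "\<dots> \<le> (1-2*t) + t^2" by simp
    also have "\<dots> = 4*(1-2*t)*l_fun t" unfolding l_fun_def using True d by (simp add: field_simps)
    finally show ?thesis using d by simp
  next
    case False
    have "1 + 2*t*\<sigma> - (1-2*t)*\<sigma>^2 - 4*t = (\<sigma>-1)*(2*t - (1-2*t)*(\<sigma>+1))"
      by (simp add: algebra_simps power2_eq_square)
    moreover have "2*t - (1-2*t)*(\<sigma>+1) \<ge> 0"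
    proof (cases "1 - 2*t \<ge> 0")
      case True
      have h1: "(1-2*t)*(\<sigma>+1) \<le> (1-2*t)*2" using sb True by (intro mult_left_mono) auto
      have h2: "t \<ge> 1/3" using False by simp
      show ?thesis using h1 h2 by (simp add: algebra_simps)
    next
      case f2: False
      have "(1-2*t)*(\<sigma>+1) \<le> 0" using sb f2 by (intro mult_nonpos_nonneg) auto
      then show ?thesis using assms by linarith
    qed
    ultimately have "1 + 2*t*\<sigma> - (1-2*t)*\<sigma>^2 - 4*t \<le> 0" using sb by (simp add: mult_nonpos_nonneg)
    then show ?thesis unfolding l_fun_def using False by simp
  qed
  moreover have "(p+q-1)^2/4 \<ge> 0" by simp
  ultimately show ?thesis unfolding e by linarith
qed

lemma block:
  assumes "\<And>x y. x \<in> A \<Longrightarrow> y \<in> B \<Longrightarrow> f x y = c"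
  shows "(\<Sum>x\<in>A. \<Sum>y\<in>B. f x y) = real (card A) * real (card B) * (c::real)"
proof -
  have "(\<Sum>x\<in>A. \<Sum>y\<in>B. f x y) = (\<Sum>x\<in>A. \<Sum>y\<in>B. c)" using assms by (intro sum.cong refl) auto
  then show ?thesis by simp
qed

lemma diag:
  assumes "finite A" "u \<in> A" "f u = 0" "\<And>y. y \<in> A \<Longrightarrow> y \<noteq> u \<Longrightarrow> f y = c"
  shows "sum f A = (real (card A) - 1) * (c::real)"
proof -
  have "sum f A = f u + sum f (A - {u})" using assms(1,2) by (rule sum.remove)
  also have "sum f (A - {u}) = (\<Sum>y\<in>A-{u}. c)" using assms(4) by (intro sum.cong refl) auto
  moreover have "card A \<ge> 1" using assms(1,2) by (metis One_nat_def Suc_leI card_gt_0_iff empty_iff)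
  ultimately show ?thesis using assms by (simp add: card_Diff_singleton of_nat_diff)
qed




lemma splitV: "sum (g::nat\<Rightarrow>real) {..<2*n} = sum g {..<n} + sum g {n..<2*n}"
proof -
  have "{..<2*n} = {..<n} \<union> {n..<2*n}" by auto
  then show ?thesis by (simp add: sum.union_disjoint ivl_disj_int)
qed

locale cons =
  fixes n :: nat and t :: real
  assumes n2: "n \<ge> 2" and t0: "0 \<le> t" and t1: "t \<le> 1"
begin

lemma n1: "real n - 1 > 0" using n2 by simp

lemma ca_nn: "ca n t \<ge> 0" unfolding ca_def using n1 t1 by simp
lemma cb_nn: "cb n t \<ge> 0" unfolding cb_def using t0 by simp

lemma wd: "weighted_digraph {..<2*n} (cw n t)"
  unfolding weighted_digraph_def using ca_nn cb_nn by (auto simp: cw_def)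

lemma rPP: "u < n \<Longrightarrow> (\<Sum>y\<in>{..<n}. cw n t u y) = (real n - 1) * ca n t"
  by (subst diag[where u=u]) (auto simp: cw_def)
lemma cPP: "u < n \<Longrightarrow> (\<Sum>y\<in>{..<n}. cw n t y u) = (real n - 1) * ca n t"
  by (subst diag[where u=u]) (auto simp: cw_def)
lemma rNN: "n \<le> u \<Longrightarrow> u < 2*n \<Longrightarrow> (\<Sum>y\<in>{n..<2*n}. cw n t u y) = (real n - 1) * ca n t"
  by (subst diag[where u=u]) (auto simp: cw_def)
lemma cNN: "n \<le> u \<Longrightarrow> u < 2*n \<Longrightarrow> (\<Sum>y\<in>{n..<2*n}. cw n t y u) = (real n - 1) * ca n t"
  by (subst diag[where u=u]) (auto simp: cw_def)
lemma rPN: "u < n \<Longrightarrow> (\<Sum>y\<in>{n..<2*n}. cw n t u y) = real n * cb n t"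
proof -
  assume "u < n"
  then have "(\<Sum>y\<in>{n..<2*n}. cw n t u y) = (\<Sum>y\<in>{n..<2*n}. cb n t)" by (intro sum.cong refl) (auto simp: cw_def)
  then show ?thesis by simp
qed
lemma cPN: "u < n \<Longrightarrow> (\<Sum>y\<in>{n..<2*n}. cw n t y u) = 0"
  by (intro sum.neutral) (auto simp: cw_def)
lemma rNP: "n \<le> u \<Longrightarrow> (\<Sum>y\<in>{..<n}. cw n t u y) = 0"
  by (intro sum.neutral) (auto simp: cw_def)
lemma cNP: "n \<le> u \<Longrightarrow> u < 2*n \<Longrightarrow> (\<Sum>y\<in>{..<n}. cw n t y u) = real n * cb n t"
proof -
  assume "n \<le> u" "u < 2*n"
  then have "(\<Sum>y\<in>{..<n}. cw n t y u) = (\<Sum>y\<in>{..<n}. cb n t)" by (intro sum.cong refl) (auto simp: cw_def)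
  then show ?thesis by simp
qed

lemma total: "total_weight {..<2*n} (cw n t) = 1"
proof -
  have "total_weight {..<2*n} (cw n t) = (\<Sum>u\<in>{..<n}. (real n - 1) * ca n t + real n * cb n t)
     + (\<Sum>u\<in>{n..<2*n}. 0 + (real n - 1) * ca n t)"
    unfolding total_weight_def splitV[of _ n]
    by (intro arg_cong2[where f="(+)"] sum.cong refl) (auto simp: rPP rPN rNN rNP)
  also have "\<dots> = 2 * real n * (real n - 1) * ca n t + real n * real n * cb n t"
    by (simp add: algebra_simps)
  also have "\<dots> = 1" unfolding ca_def cb_def using n1 n2 by (simp add: field_simps power2_eq_square)
  finally show ?thesis .
qed

lemma exP: "u < n \<Longrightarrow> excess {..<2*n} (cw n t) u = real n * cb n t"
  unfolding excess_def splitV[of _ n] by (simp add: rPP rPN cPP cPN)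
lemma exN: "n \<le> u \<Longrightarrow> u < 2*n \<Longrightarrow> excess {..<2*n} (cw n t) u = - (real n * cb n t)"
  unfolding excess_def splitV[of _ n] by (simp add: rNN rNP cNN cNP)

lemma rplus: "rplus {..<2*n} (cw n t) = t"
proof (cases "t = 0")
  case True
  have "{x \<in> {..<2*n}. excess {..<2*n} (cw n t) x > 0} = {}"
  proof -
    have "excess {..<2*n} (cw n t) x = 0" if "x < 2*n" for x
      using that exP exN True unfolding cb_def by (cases "x < n") auto
    then show ?thesis by auto
  qed
  then show ?thesis unfolding rplus_def using True by (simp only:) simp
next
  case False
  then have cbp: "cb n t > 0" unfolding cb_def using t0 n2 by simp
  have S: "{x \<in> {..<2*n}. excess {..<2*n} (cw n t) x > 0} = {..<n}"
  proof -
    have "excess {..<2*n} (cw n t) x > 0 \<longleftrightarrow> x < n" if "x < 2*n" for x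
    proof -
      have "real n * cb n t > 0" using cbp n2 by simp
      then show ?thesis using that exP exN by (cases "x < n") auto
    qed
    then show ?thesis by auto
  qed
  have "rplus {..<2*n} (cw n t) = (\<Sum>x\<in>{..<n}. real n * cb n t)"
    unfolding rplus_def S by (intro sum.cong refl) (simp add: exP)
  also have "\<dots> = t" unfolding cb_def using n2 by (simp add: power2_eq_square)
  finally show ?thesis .
qed

lemma theta: "theta {..<2*n} (cw n t) = t"
  unfolding theta_def rplus total by simp

lemma cut_val:
  assumes X: "X \<subseteq> {..<2*n}"
  shows "cut_weight (cw n t) X ({..<2*n} - X) =
     ca n t * real (card (X \<inter> {..<n})) * real (card ({..<n} - X))
   + cb n t * real (card (X \<inter> {..<n})) * real (card ({n..<2*n} - X))
   + ca n t * real (card (X \<inter> {n..<2*n})) * real (card ({n..<2*n} - X))"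
proof -
  let ?P = "{..<n}" and ?N = "{n..<2*n}"
  define XP where "XP = X \<inter> ?P"
  define XN where "XN = X \<inter> ?N"
  have XX: "X = XP \<union> XN" using X unfolding XP_def XN_def by auto
  have YY: "{..<2*n} - X = (?P - X) \<union> (?N - X)" by auto
  have fX: "finite XP" "finite XN" unfolding XP_def XN_def by auto
  have fY: "finite (?P - X)" "finite (?N - X)" by auto
  have d1: "XP \<inter> XN = {}" unfolding XP_def XN_def by auto
  have d2: "(?P - X) \<inter> (?N - X) = {}" by auto
  have "cut_weight (cw n t) X ({..<2*n} - X) =
    (\<Sum>x\<in>XP. \<Sum>y\<in>?P - X. cw n t x y) + (\<Sum>x\<in>XP. \<Sum>y\<in>?N - X. cw n t x y)
    + ((\<Sum>x\<in>XN. \<Sum>y\<in>?P - X. cw n t x y) + (\<Sum>x\<in>XN. \<Sum>y\<in>?N - X. cw n t x y))"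
  proof -
    have hx: "sum g X = sum g XP + sum g XN" for g :: "nat \<Rightarrow> real"
      by (simp add: XX sum.union_disjoint[OF fX d1])
    show ?thesis unfolding cut_weight_def YY hx
      by (simp only: sum.union_disjoint[OF fY d2] sum.distrib)
  qed
  also have "\<dots> = ca n t * real (card XP) * real (card (?P - X))
   + cb n t * real (card XP) * real (card (?N - X))
   + (0 + ca n t * real (card XN) * real (card (?N - X)))"
    by (intro arg_cong2[where f="(+)"]; subst block) (auto simp: cw_def XP_def XN_def)
  finally show ?thesis unfolding XP_def XN_def by simp
qed

lemma mac_bound: "mac {..<2*n} (cw n t) \<le> real n / (real n - 1) * l_fun t"
proof (rule mac_le)
  fix X assume X: "X \<subseteq> {..<2*n}"
  define k where "k = card (X \<inter> {..<n})"
  define m where "m = card (X \<inter> {n..<2*n})"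
  have ck: "real (card ({..<n} - X)) = real n - real k" "k \<le> n"
  proof -
    have "card ({..<n}) = card ({..<n} - X) + card (X \<inter> {..<n})"
      by (metis card_Diff_subset_Int finite_Int finite_lessThan Int_commute Int_lower1 card_mono le_add_diff_inverse2 order_refl inf.commute)
    then show "real (card ({..<n} - X)) = real n - real k" "k \<le> n" unfolding k_def by auto
  qed
  have cm: "real (card ({n..<2*n} - X)) = real n - real m" "m \<le> n"
  proof -
    have "card ({n..<2*n}) = card ({n..<2*n} - X) + card (X \<inter> {n..<2*n})"
      by (metis card_Diff_subset_Int finite_Int finite_atLeastLessThan Int_commute Int_lower1 card_mono le_add_diff_inverse2 order_refl inf.commute)
    then show "real (card ({n..<2*n} - X)) = real n - real m" "m \<le> n" unfolding m_def by auto
  qed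
  define N where "N = real n"
  define p where "p = real k / N"
  define q where "q = real m / N"
  have Np: "N > 1" unfolding N_def using n2 by simp
  have pq: "0 \<le> p" "p \<le> 1" "0 \<le> q" "q \<le> 1" unfolding p_def q_def N_def using ck(2) cm(2) n2 by auto
  have kp: "real k = p * real n" "real m = q * real n" unfolding p_def q_def N_def using Np N_def by auto
  have "cut_weight (cw n t) X ({..<2*n} - X) = ca n t * (p*N) * (N - p*N) + cb n t * (p*N) * (N - q*N)
        + ca n t * (q*N) * (N - q*N)"
    unfolding cut_val[OF X] k_def[symmetric] m_def[symmetric] ck(1) cm(1) kp N_def ..
  also have "\<dots> = N/(N-1) * ((1-t)/2*(p*(1-p)+q*(1-q))) + t*p*(1-q)"
  proof -
    have a: "ca n t * (x*N) * (N - x*N) = N/(N-1) * ((1-t)/2*(x*(1-x)))" for x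
      unfolding ca_def N_def[symmetric] using Np by (simp add: field_simps power2_eq_square)
    have b: "cb n t * (p*N) * (N - q*N) = t*p*(1-q)"
      unfolding cb_def N_def[symmetric] using Np by (simp add: field_simps power2_eq_square)
    show ?thesis unfolding a b by (simp only: distrib_left add_ac)
  qed
  also have "\<dots> \<le> N/(N-1) * ((1-t)/2*(p*(1-p)+q*(1-q)) + t*p*(1-q))"
  proof -
    have "t*p*(1-q) \<ge> 0" using pq t0 by simp
    moreover have "N/(N-1) \<ge> 1" using Np by simp
    ultimately have "t*p*(1-q) \<le> N/(N-1) * (t*p*(1-q))"
      by (metis mult_right_mono mult_1 mult.commute)
    then show ?thesis by (simp add: distrib_left)
  qed
  also have "\<dots> \<le> N/(N-1) * l_fun t"
    using E_le[OF t0 t1 pq] Np by (intro mult_left_mono) auto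
  finally show "cut_weight (cw n t) X ({..<2*n} - X) \<le> real n / (real n - 1) * l_fun t"
    unfolding N_def .
qed simp

end




lemma l_pos: "0 \<le> t \<Longrightarrow> l_fun t > 0"
proof -
  assume t: "0 \<le> t"
  show ?thesis
  proof (cases "t < 1/3")
    case True
    have "t^2 / (4 * (1 - 2*t)) \<ge> 0" using True by simp
    then have "1/4 + t^2 / (4 * (1 - 2*t)) > 0" by linarith
    then show ?thesis unfolding l_fun_def using True by simp
  qed (simp add: l_fun_def)
qed

theorem mainTheorem9:
  fixes t :: real
  assumes "0 \<le> t" and "t \<le> 1"
  shows "f_fun t = l_fun t"
proof -
  define S where "S = {g. \<forall>V w. weighted_digraph V w \<and> total_weight V w > 0 \<and> theta V w = t
                 \<longrightarrow> mac V w \<ge> g * total_weight V w}"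
  have mem: "l_fun t \<in> S" unfolding S_def using lower_bound assms(1) by blast
  have ub: "g \<le> l_fun t" if g: "g \<in> S" for g
  proof (rule ccontr)
    assume "\<not> g \<le> l_fun t"
    then have gl: "g > l_fun t" by simp
    have lp: "l_fun t > 0" using l_pos assms(1) by blast
    obtain m :: nat where m: "g / (g - l_fun t) + 2 < real m" using reals_Archimedean2 by blast
    have gp: "g - l_fun t > 0" using gl by simp
    have q: "g / (g - l_fun t) > 0" using gl lp gp by simp
    have m2: "m \<ge> 2" using m q by linarith
    interpret cons m t using m2 assms by unfold_locales auto
    have "mac {..<2*m} (cw m t) \<ge> g * total_weight {..<2*m} (cw m t)"
    proof -
      have c: "weighted_digraph {..<2*m} (cw m t) \<and> total_weight {..<2*m} (cw m t) > 0 \<and> theta {..<2*m} (cw m t) = t"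
        using wd total theta by simp
      have "\<forall>V w. weighted_digraph V w \<and> total_weight V w > 0 \<and> theta V w = t
                 \<longrightarrow> mac V w \<ge> g * total_weight V w" using g unfolding S_def by simp
      then show ?thesis using c by blast
    qed
    then have A: "mac {..<2*m} (cw m t) \<ge> g" using total by simp
    have B: "mac {..<2*m} (cw m t) \<le> real m / (real m - 1) * l_fun t" by (rule mac_bound)
    have "real m / (real m - 1) * l_fun t < g"
    proof -
      have mm: "real m - 1 > 0" using m2 by simp
      have "g < real m * (g - l_fun t)" using m gp by (simp add: field_simps)
      then have "real m * l_fun t < g * (real m - 1)" by (simp add: algebra_simps)
      then show ?thesis using mm by (simp add: field_simps)
    qed
    then show False using A B by linarith
  qed
  have "Sup S = l_fun t" by (rule cSup_eq_maximum[OF mem]) (use ub in auto)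
  then show ?thesis unfolding f_fun_def S_def .
qed


end
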